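(* Let $I$ be a set of players, for each $i\in I$ let $G_i$ be a compact convex subset of a Hausdorff locally convex topological vector space, and let $G=(G_i,P_i,Q_i)_{i\in I}$ be a general qualitative game satisfying property $T$, where $P_i,Q_i:\prod_{j\in I}G_j\to 2^{G_i}$ satisfy for each $i\in I$: (i) $y_i\in Q_i(y_i,x_{-i})$ for each $y_i\in G_i$ and each $x_{-i}\in G_{-i}$; (ii) $Q_i$ has convex closed values; (iii) $P_i$ has convex values; (iv) $x_i\notin P_i(x)$ for each $x\in\prod_{j\in I}G_j$; (v) $P_i^{-1}(y_i)=\{x\in\prod_{j\in I}G_j: y_i\in P_i(x)\}$ is open in $\prod_{j\in I}G_j$ for each $y_i\in G_i$. Then: (a) if $G\to^* H$ and there exist $i\in I$ and $x_i,y_i\in G_i$ with $y_i\succ_H x_i$, then there exists $x_i^*\in H_i$ such that $x_i^*\succ_H x_i$ and $z_i\not\succ_H x_i^*$ for all $z_i\in G_i$; (b) if $M$ is a nonempty maximal $(\to^* )$-reduction of $G$, then $M$ is the unique maximal $(\to^* )$-reduction of $G$.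
   Context: $I$ is a nonempty set; $X=\prod_{j\in I}G_j$, $G_{-i}=\prod_{j\ne i}G_j$, $x=(x_i,x_{-i})$. A general qualitative game is $G=(G_i,P_i,Q_i)_{i\in I}$ with correspondences $P_i,Q_i:X\to 2^{G_i}$. It satisfies property $T$ if for each $i$ and each $x\in X$: $P_i(x)\subseteq Q_i(x)$, and $y_i\in P_i(x)$ implies $Q_i(y_i,x_{-i})\subseteq P_i(x)$. A pairing of $G$ is a family $H=(H_i)_{i\in I}$ with $H_i\subseteq G_i$ (the $P_i$ restricted to $\prod_jH_j$); $H_{-i}=\prod_{j\ne i}H_j$; $H$ is nonempty if every $H_i\neq\emptyset$. For $x_i,y_i\in G_i$: $y_i\succ_H x_i$ iff $H_{-i}\neq\emptyset$ and $y_i\in P_i(x_i,x_{-i})$ for all $x_{-i}\in H_{-i}$. For pairings $R,S$ with $S_i\subseteq R_i$ for all $i$: $R\to S$ means for every $i$ and $x_i\in R_i\setminus S_i$, $\bigcap_{x_{-i}\in R_{-i}}P_i(x_i,x_{-i})\ne\emptyset$; it is fast if moreover for every $i$ and $x_i\in R_i$, $\bigcap_{x_{-i}\in R_{-i}}P_i(x_i,x_{-i})\neq\emptyset$ implies $x_i\notin S_i$. $G\to^*H$ means there is a finite or countably infinite sequence of pairings $R^0=G,R^1,\dots$ with $R^t\to R^{t+1}$ fast for each $t$ and $H_i=\bigcap_tR^t_i$ for each $i$. $H$ is a maximal $(\to^* )$-reduction of $G$ if $G\to^*H$ and, for pairings $H'$ with $H'_i\subseteq H_i$, $H\to H'$ holds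 only for $H'=H$. *)

theory Defs
  imports "HOL-Analysis.Analysis"
begin

definition lc_tvs :: "'v::real_vector topology \<Rightarrow> bool" where
  "lc_tvs T \<longleftrightarrow> topspace T = UNIV \<and> Hausdorff_space T
     \<and> continuous_map (prod_topology T T) T (\<lambda>(x, y). x + y)
     \<and> continuous_map (prod_topology euclideanreal T) T (\<lambda>(a, x). a *\<^sub>R x)
     \<and> (\<forall>U x. openin T U \<and> x \<in> U \<longrightarrow> (\<exists>V. openin T V \<and> convex V \<and> x \<in> V \<and> V \<subseteq> U))"

text \<open>Profiles are functions 'i => 'v; (x_i, x_{-i}) is written z(i := xi) with
  z in PiE (I - {i}) H (the profile of the other players).\<close>

definition property_T :: "'i set \<Rightarrow> ('i \<Rightarrow> 'v set) \<Rightarrow> ('i \<Rightarrow> ('i \<Rightarrow> 'v) \<Rightarrow> 'v set)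
    \<Rightarrow> ('i \<Rightarrow> ('i \<Rightarrow> 'v) \<Rightarrow> 'v set) \<Rightarrow> bool" where
  "property_T I G P Q \<longleftrightarrow> (\<forall>i\<in>I. \<forall>x\<in>PiE I G. P i x \<subseteq> Q i x \<and>
      (\<forall>y\<in>P i x. Q i (x(i := y)) \<subseteq> P i x))"

definition succ_H :: "'i set \<Rightarrow> ('i \<Rightarrow> ('i \<Rightarrow> 'v) \<Rightarrow> 'v set) \<Rightarrow> ('i \<Rightarrow> 'v set)
    \<Rightarrow> 'i \<Rightarrow> 'v \<Rightarrow> 'v \<Rightarrow> bool" where
  "succ_H I P H i y x \<longleftrightarrow> PiE (I - {i}) H \<noteq> {} \<and>
      (\<forall>z\<in>PiE (I - {i}) H. y \<in> P i (z(i := x)))"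

definition dominated :: "'i set \<Rightarrow> ('i \<Rightarrow> 'v set) \<Rightarrow> ('i \<Rightarrow> ('i \<Rightarrow> 'v) \<Rightarrow> 'v set)
    \<Rightarrow> ('i \<Rightarrow> 'v set) \<Rightarrow> 'i \<Rightarrow> 'v \<Rightarrow> bool" where
  "dominated I G P R i x \<longleftrightarrow> (G i \<inter> (\<Inter>z\<in>PiE (I - {i}) R. P i (z(i := x)))) \<noteq> {}"

definition red_step :: "'i set \<Rightarrow> ('i \<Rightarrow> 'v set) \<Rightarrow> ('i \<Rightarrow> ('i \<Rightarrow> 'v) \<Rightarrow> 'v set)
    \<Rightarrow> ('i \<Rightarrow> 'v set) \<Rightarrow> ('i \<Rightarrow> 'v set) \<Rightarrow> bool" where
  "red_step I G P R S \<longleftrightarrow> (\<forall>i\<in>I. S i \<subseteq> R i) \<and>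
      (\<forall>i\<in>I. \<forall>x\<in>R i - S i. dominated I G P R i x)"

definition fast_step :: "'i set \<Rightarrow> ('i \<Rightarrow> 'v set) \<Rightarrow> ('i \<Rightarrow> ('i \<Rightarrow> 'v) \<Rightarrow> 'v set)
    \<Rightarrow> ('i \<Rightarrow> 'v set) \<Rightarrow> ('i \<Rightarrow> 'v set) \<Rightarrow> bool" where
  "fast_step I G P R S \<longleftrightarrow> red_step I G P R S \<and>
      (\<forall>i\<in>I. \<forall>x\<in>R i. dominated I G P R i x \<longrightarrow> x \<notin> S i)"

definition red_star :: "'i set \<Rightarrow> ('i \<Rightarrow> 'v set) \<Rightarrow> ('i \<Rightarrow> ('i \<Rightarrow> 'v) \<Rightarrow> 'v set)
    \<Rightarrow> ('i \<Rightarrow> 'v set) \<Rightarrow> bool" where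
  "red_star I G P H \<longleftrightarrow> (\<exists>R :: nat \<Rightarrow> 'i \<Rightarrow> 'v set. (\<forall>i\<in>I. R 0 i = G i) \<and>
      ((\<exists>n. (\<forall>t<n. fast_step I G P (R t) (R (Suc t))) \<and> (\<forall>i\<in>I. H i = (\<Inter>t\<le>n. R t i)))
       \<or> ((\<forall>t. fast_step I G P (R t) (R (Suc t))) \<and> (\<forall>i\<in>I. H i = (\<Inter>t. R t i)))))"

definition maximal_red :: "'i set \<Rightarrow> ('i \<Rightarrow> 'v set) \<Rightarrow> ('i \<Rightarrow> ('i \<Rightarrow> 'v) \<Rightarrow> 'v set)
    \<Rightarrow> ('i \<Rightarrow> 'v set) \<Rightarrow> bool" where
  "maximal_red I G P H \<longleftrightarrow> red_star I G P H \<and>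
      (\<forall>H'. (\<forall>i\<in>I. H' i \<subseteq> H i) \<longrightarrow> red_step I G P H H' \<longrightarrow> (\<forall>i\<in>I. H' i = H i))"

end

theory Submission
  imports Defs
begin

lemma finite_chain_max:
  assumes "finite F" "F \<noteq> {}" "\<forall>a\<in>F. \<forall>b\<in>F. R a b \<or> R b a"
    and tr: "\<forall>a\<in>F. \<forall>b\<in>F. \<forall>c\<in>F. R a b \<longrightarrow> R b c \<longrightarrow> R a c"
  shows "\<exists>m\<in>F. \<forall>a\<in>F. R a m"
  using assms
proof (induction F rule: finite_ne_induct)
  case (singleton x)
  have "R x x" using singleton.prems(1) by blast
  then show ?case by blast
next
  case (insert a F)
  have tot: "R u v \<or> R v u" if "u \<in> insert a F" "v \<in> insert a F" for u v
    using insert.prems(1) that by blast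
  have trn: "R u w" if "u \<in> insert a F" "v \<in> insert a F" "w \<in> insert a F" "R u v" "R v w" for u v w
    using insert.prems(2) that by blast
  have "\<forall>u\<in>F. \<forall>v\<in>F. R u v \<or> R v u"
  proof (intro ballI)
    fix u v assume "u \<in> F" "v \<in> F"
    then show "R u v \<or> R v u" using tot[of u v] by simp
  qed
  moreover have "\<forall>u\<in>F. \<forall>v\<in>F. \<forall>w\<in>F. R u v \<longrightarrow> R v w \<longrightarrow> R u w"
  proof (intro ballI impI)
    fix u v w assume "u \<in> F" "v \<in> F" "w \<in> F" "R u v" "R v w"
    then show "R u w" using trn[of u v w] by simp
  qed
  ultimately obtain m where m: "m\<in>F" "\<forall>b\<in>F. R b m" using insert.IH by blast
  have mi: "m \<in> insert a F" using m by simp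
  have ai: "a \<in> insert a F" by simp
  show ?case
  proof (cases "R a m")
    case True
    then show ?thesis using m by auto
  next
    case False
    then have h: "R m a" using tot[OF mi ai] by blast
    have "R b a" if "b \<in> insert a F" for b
    proof (cases "b = a")
      case True then show ?thesis using tot[OF ai ai] by simp
    next
      case False
      then have bF: "b \<in> F" using that by simp
      then have "R b m" using m by blast
      then show ?thesis using trn[OF that mi ai _ h] by blast
    qed
    then show ?thesis by blast
  qed
qed

lemma zorn_max:
  fixes s :: "'a \<Rightarrow> 'a \<Rightarrow> bool" and C :: "'a \<Rightarrow> 'a set"
  assumes cpt: "compactin T G"
    and irr: "\<And>a. a \<in> G \<Longrightarrow> \<not> s a a"
    and trs: "\<And>a b c. a \<in> G \<Longrightarrow> s b a \<Longrightarrow> s c b \<Longrightarrow> s c a"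
    and cl: "\<And>a b. a \<in> G \<Longrightarrow> s b a \<Longrightarrow> b \<in> G"
    and Ccl: "\<And>b. b \<in> G \<Longrightarrow> closedin T (C b)"
    and Cself: "\<And>b. b \<in> G \<Longrightarrow> b \<in> C b"
    and CG: "\<And>b. b \<in> G \<Longrightarrow> C b \<subseteq> G"
    and Cup: "\<And>a b w. a \<in> G \<Longrightarrow> s b a \<Longrightarrow> w \<in> C b \<Longrightarrow> s w a"
    and Cdn: "\<And>a w. a \<in> G \<Longrightarrow> s w a \<Longrightarrow> w \<in> C a"
    and x: "x \<in> G" and y: "s y x"
  shows "\<exists>m\<in>G. s m x \<and> (\<forall>z. \<not> s z m)"
proof -
  define A where "A = {w\<in>G. s w x}"
  define Pr where "Pr = (\<lambda>a b. a = b \<or> s b a)"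
  have trA: "Pr a c" if "a \<in> A" "Pr a b" "Pr b c" for a b c
  proof -
    have aG: "a \<in> G" using that(1) unfolding A_def by simp
    show ?thesis using that(2,3) trs[OF aG] unfolding Pr_def by blast
  qed
  have antis: "a = b" if "a \<in> A" "Pr a b" "Pr b a" for a b
  proof (rule ccontr)
    assume ne: "a \<noteq> b"
    have aG: "a \<in> G" using that(1) unfolding A_def by simp
    have "s b a" "s a b" using that(2,3) ne unfolding Pr_def by auto
    then have "s a a" using trs[OF aG] by blast
    then show False using irr[OF aG] by blast
  qed
  have po: "partial_order_on A (relation_of Pr A)"
    unfolding partial_order_on_def preorder_on_def refl_on_def trans_def antisym_def relation_of_def
    apply (intro conjI)
    subgoal by auto
    subgoal by (auto simp: Pr_def)
    subgoal using trA by blast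
    subgoal using antis by blast
    done
  have CC: "C b \<subseteq> C a" if "a \<in> G" "Pr a b" for a b
  proof (cases "a = b")
    case False
    then have "s b a" using that unfolding Pr_def by auto
    show ?thesis
    proof
      fix w assume "w \<in> C b"
      then have "s w a" using Cup[OF that(1) \<open>s b a\<close>] by blast
      then show "w \<in> C a" using Cdn[OF that(1)] by blast
    qed
  qed auto
  have ch: "\<exists>u \<in> A. \<forall>a \<in> K. Pr a u" if K: "K \<in> Chains (relation_of Pr A)" for K
  proof -
    have KA: "K \<subseteq> A" using K unfolding Chains_def relation_of_def by auto
    have tot: "\<forall>a\<in>K. \<forall>b\<in>K. Pr a b \<or> Pr b a" using K unfolding Chains_def relation_of_def by auto
    show ?thesis
    proof (cases "K = {}")
      case True then show ?thesis using y cl x unfolding A_def by auto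
    next
      case Kne: False
      show ?thesis
      proof (cases "\<exists>m\<in>K. \<forall>a\<in>K. Pr a m")
        case True then show ?thesis using KA by blast
      next
        case nomax: False
        have "G \<inter> \<Inter>(C ` K) \<noteq> {}"
        proof -
          have "\<forall>\<U>. (\<forall>D\<in>\<U>. closedin T D) \<and> (\<forall>\<F>. finite \<F> \<and> \<F> \<subseteq> \<U> \<longrightarrow> G \<inter> \<Inter>\<F> \<noteq> {}) \<longrightarrow> G \<inter> \<Inter>\<U> \<noteq> {}"
            using cpt unfolding compactin_fip by blast
          moreover have "\<forall>D\<in>C ` K. closedin T D" using KA Ccl unfolding A_def by auto
          moreover have "G \<inter> \<Inter>\<F> \<noteq> {}" if FF: "finite \<F>" "\<F> \<subseteq> C ` K" for \<F>
          proof -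
            obtain F0 where F0: "F0 \<subseteq> K" "finite F0" "\<F> = C ` F0"
              using finite_subset_image[OF FF(1) FF(2)] by blast
            show ?thesis
            proof (cases "F0 = {}")
              case True then show ?thesis using F0 x by auto
            next
              case False
              have tot0: "\<forall>a\<in>F0. \<forall>b\<in>F0. Pr a b \<or> Pr b a" using tot F0(1) by blast
              have tr0: "\<forall>a\<in>F0. \<forall>b\<in>F0. \<forall>c\<in>F0. Pr a b \<longrightarrow> Pr b c \<longrightarrow> Pr a c"
                using trA F0(1) KA by blast
              obtain m where m: "m \<in> F0" "\<forall>a\<in>F0. Pr a m"
                using finite_chain_max[of F0 Pr, OF F0(2) False tot0 tr0] by blast
              have mG: "m \<in> G" using m F0 KA unfolding A_def by auto
              have "m \<in> C a" if "a \<in> F0" for a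
              proof -
                have "a \<in> G" using that F0(1) KA unfolding A_def by auto
                moreover have "Pr a m" using m(2) that by blast
                ultimately have "C m \<subseteq> C a" by (rule CC)
                then show ?thesis using Cself[OF mG] by blast
              qed
              then show ?thesis using F0 mG by auto
            qed
          qed
          ultimately show ?thesis by blast
        qed
        then obtain w where w: "w \<in> G" "\<forall>a\<in>K. w \<in> C a" by auto
        have sw: "s w a" if aK: "a \<in> K" for a
        proof -
          obtain d where d: "d \<in> K" "\<not> Pr d a" using nomax aK by auto
          then have "Pr a d" using tot aK by auto
          then have "s d a" using d unfolding Pr_def by auto
          moreover have "a \<in> G" using KA aK unfolding A_def by auto
          moreover have "w \<in> C d" using w d by auto
          ultimately show ?thesis using Cup by blast
        qed
        obtain a where a: "a \<in> K" using Kne by auto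
        have "s a x" using a KA unfolding A_def by auto
        then have "s w x" using trs[OF x _ sw[OF a]] by blast
        then have "w \<in> A" using w(1) unfolding A_def by simp
        then show ?thesis using sw unfolding Pr_def by blast
      qed
    qed
  qed
  obtain m where m: "m \<in> A" "\<forall>a\<in>A. Pr m a \<longrightarrow> a = m"
    using predicate_Zorn[OF po ch] by blast
  have "\<not> s z m" for z
  proof
    assume h: "s z m"
    have mG: "m \<in> G" "s m x" using m unfolding A_def by auto
    have "z \<in> G" using cl[OF mG(1) h] .
    moreover have "s z x" using trs[OF x mG(2) h] .
    ultimately have "z \<in> A" unfolding A_def by simp
    then have "z = m" using m h unfolding Pr_def by auto
    then show False using h irr mG by auto
  qed
  then show ?thesis using m unfolding A_def by auto
qed

primrec canon :: "'i set \<Rightarrow> ('i \<Rightarrow> 'v set) \<Rightarrow> ('i \<Rightarrow> ('i \<Rightarrow> 'v) \<Rightarrow> 'v set) \<Rightarrow> nat \<Rightarrow> 'i \<Rightarrow> 'v set" where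
  "canon I G P 0 = G"
| "canon I G P (Suc t) = (\<lambda>i. {x \<in> canon I G P t i. \<not> dominated I G P (canon I G P t) i x})"

lemma dominated_cong:
  assumes "\<forall>j\<in>I. A j = B j"
  shows "dominated I G P A i x = dominated I G P B i x"
proof -
  have "PiE (I - {i}) A = PiE (I - {i}) B" using assms by (intro PiE_cong) auto
  then show ?thesis unfolding dominated_def by simp
qed

lemma fast_step_eq:
  "fast_step I G P R S \<Longrightarrow> \<forall>i\<in>I. S i = {x \<in> R i. \<not> dominated I G P R i x}"
  unfolding fast_step_def red_step_def by blast

lemma seq_canon:
  assumes "\<forall>i\<in>I. R 0 i = G i" "\<forall>t<n. fast_step I G P (R t) (R (Suc t))"
  shows "t \<le> n \<Longrightarrow> \<forall>i\<in>I. R t i = canon I G P t i"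
proof (induction t)
  case 0 then show ?case using assms by simp
next
  case (Suc t)
  then have IH: "\<forall>i\<in>I. R t i = canon I G P t i" by simp
  have fs: "\<forall>i\<in>I. R (Suc t) i = {x \<in> R t i. \<not> dominated I G P (R t) i x}"
  proof -
    have "fast_step I G P (R t) (R (Suc t))" using assms(2) Suc.prems by simp
    then show ?thesis by (rule fast_step_eq)
  qed
  show ?case
  proof
    fix i assume i: "i \<in> I"
    have "dominated I G P (R t) i x = dominated I G P (canon I G P t) i x" for x
      using dominated_cong[OF IH] by blast
    then show "R (Suc t) i = canon I G P (Suc t) i" using fs IH i by simp
  qed
qed

lemma canon_mono_add: "canon I G P (t + k) i \<subseteq> canon I G P t i"
  by (induction k) auto

lemma canon_mono: "t \<le> t' \<Longrightarrow> canon I G P t' i \<subseteq> canon I G P t i"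
  using canon_mono_add[of I G P t "t' - t" i] by simp

lemma Inter_le_canon: "(\<Inter>t\<le>n. canon I G P t i) = canon I G P n i"
proof (rule antisym)
  show "(\<Inter>t\<le>n. canon I G P t i) \<subseteq> canon I G P n i" by (rule INT_lower) simp
  show "canon I G P n i \<subseteq> (\<Inter>t\<le>n. canon I G P t i)"
    by (rule INT_greatest) (simp add: canon_mono)
qed

lemma red_star_canon:
  assumes "red_star I G P H"
  shows "(\<exists>n. \<forall>i\<in>I. H i = canon I G P n i) \<or> (\<forall>i\<in>I. H i = (\<Inter>t. canon I G P t i))"
proof -
  obtain R :: "nat \<Rightarrow> _" where Rall: "(\<forall>i\<in>I. R 0 i = G i) \<and>
      ((\<exists>n. (\<forall>t<n. fast_step I G P (R t) (R (Suc t))) \<and> (\<forall>i\<in>I. H i = (\<Inter>t\<le>n. R t i)))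
       \<or> ((\<forall>t. fast_step I G P (R t) (R (Suc t))) \<and> (\<forall>i\<in>I. H i = (\<Inter>t. R t i))))"
    using assms[unfolded red_star_def] ..
  have R0: "\<forall>i\<in>I. R 0 i = G i" using Rall by (rule conjunct1)
  have cs: "(\<exists>n. (\<forall>t<n. fast_step I G P (R t) (R (Suc t))) \<and> (\<forall>i\<in>I. H i = (\<Inter>t\<le>n. R t i)))
       \<or> ((\<forall>t. fast_step I G P (R t) (R (Suc t))) \<and> (\<forall>i\<in>I. H i = (\<Inter>t. R t i)))"
    using Rall by (rule conjunct2)
  from cs show ?thesis
  proof
    assume "\<exists>n. (\<forall>t<n. fast_step I G P (R t) (R (Suc t))) \<and> (\<forall>i\<in>I. H i = (\<Inter>t\<le>n. R t i))"
    then obtain n where nn: "(\<forall>t<n. fast_step I G P (R t) (R (Suc t))) \<and> (\<forall>i\<in>I. H i = (\<Inter>t\<le>n. R t i))" ..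
    note n = conjunct1[OF nn] conjunct2[OF nn]
    have "\<forall>i\<in>I. H i = canon I G P n i"
    proof
      fix i assume i: "i \<in> I"
      have "(\<Inter>t\<le>n. R t i) = (\<Inter>t\<le>n. canon I G P t i)"
        using seq_canon[where R=R and I=I and G=G and P=P and n=n, OF R0 n(1)] i by auto
      then show "H i = canon I G P n i" using n(2) i Inter_le_canon[where n=n and I=I and G=G and P=P and i=i] by simp
    qed
    then have "\<exists>n. \<forall>i\<in>I. H i = canon I G P n i" ..
    then show ?thesis by (rule disjI1)
  next
    assume h: "(\<forall>t. fast_step I G P (R t) (R (Suc t))) \<and> (\<forall>i\<in>I. H i = (\<Inter>t. R t i))"
    have Rc: "\<forall>i\<in>I. R t i = canon I G P t i" for t
    proof -
      have "\<forall>s<t. fast_step I G P (R s) (R (Suc s))" using h by blast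
      then show ?thesis by (rule seq_canon[where R=R and I=I and G=G and P=P and n=t and t=t, OF R0 _ order_refl])
    qed
    have "\<forall>i\<in>I. H i = (\<Inter>t. canon I G P t i)"
    proof
      fix i assume i: "i \<in> I"
      have "(\<Inter>t. R t i) = (\<Inter>t. canon I G P t i)" using Rc i by simp
      then show "H i = (\<Inter>t. canon I G P t i)" using h i by simp
    qed
    then show ?thesis by (rule disjI2)
  qed
qed

lemma red_star_sub:
  assumes "red_star I G P H" "j \<in> I"
  shows "H j \<subseteq> G j"
proof -
  have "H j \<subseteq> canon I G P 0 j"
    using red_star_canon[OF assms(1)]
  proof
    assume "\<exists>n. \<forall>i\<in>I. H i = canon I G P n i"
    then obtain n where n: "\<forall>i\<in>I. H i = canon I G P n i" ..
    have "canon I G P n j \<subseteq> canon I G P 0 j" by (rule canon_mono) simp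
    then show ?thesis using n assms(2) by simp
  next
    assume H: "\<forall>i\<in>I. H i = (\<Inter>t. canon I G P t i)"
    have "(\<Inter>t. canon I G P t j) \<subseteq> canon I G P 0 j" by (rule INT_lower) simp
    then show ?thesis using H assms(2) by simp
  qed
  then show ?thesis by simp
qed

lemma maximal_fix:
  assumes "maximal_red I G P H"
  shows "\<forall>i\<in>I. {x \<in> H i. \<not> dominated I G P H i x} = H i"
proof -
  have rs: "red_step I G P H (\<lambda>i. {x \<in> H i. \<not> dominated I G P H i x})"
    unfolding red_step_def by auto
  have sub: "(\<forall>i\<in>I. {x \<in> H i. \<not> dominated I G P H i x} \<subseteq> H i)" by auto
  have m2: "\<forall>H'. (\<forall>i\<in>I. H' i \<subseteq> H i) \<longrightarrow> red_step I G P H H' \<longrightarrow> (\<forall>i\<in>I. H' i = H i)"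
    using assms unfolding maximal_red_def by (rule conjunct2)
  have sp: "(\<forall>i\<in>I. {x \<in> H i. \<not> dominated I G P H i x} \<subseteq> H i) \<longrightarrow>
      red_step I G P H (\<lambda>i. {x \<in> H i. \<not> dominated I G P H i x}) \<longrightarrow>
      (\<forall>i\<in>I. {x \<in> H i. \<not> dominated I G P H i x} = H i)"
    using spec[OF m2, of "\<lambda>i. {x \<in> H i. \<not> dominated I G P H i x}"] .
  show ?thesis using mp[OF mp[OF sp sub] rs] .
qed

lemma maximal_canon_stable:
  assumes "maximal_red I G P H" "\<forall>i\<in>I. H i = canon I G P n i"
  shows "\<forall>i\<in>I. canon I G P (n + k) i = H i"
proof (induction k)
  case 0 then show ?case using assms by simp
next
  case (Suc k)
  show ?case
  proof
    fix i assume i: "i \<in> I"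
    have "dominated I G P (canon I G P (n + k)) i x = dominated I G P H i x" for x
      using dominated_cong[OF Suc.IH] by blast
    then have "canon I G P (n + Suc k) i = {x \<in> H i. \<not> dominated I G P H i x}"
      using Suc.IH i by simp
    then show "canon I G P (n + Suc k) i = H i" using maximal_fix[OF assms(1)] i by simp
  qed
qed

lemma maximal_canon_Inter:
  assumes "maximal_red I G P H" "\<forall>i\<in>I. H i = canon I G P n i"
  shows "\<forall>i\<in>I. (\<Inter>t. canon I G P t i) = H i"
proof
  fix i assume i: "i \<in> I"
  have "canon I G P t i = H i" if "n \<le> t" for t
    using maximal_canon_stable[OF assms, of "t - n"] i that by simp
  moreover have "H i \<subseteq> canon I G P t i" if "t \<le> n" for t
    using canon_mono[OF that, of I G P i] assms(2) i by auto
  ultimately have "canon I G P t i \<supseteq> H i" for t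
    by (cases "n \<le> t") auto
  then have "H i \<subseteq> (\<Inter>t. canon I G P t i)" by (intro INT_greatest)
  moreover have "(\<Inter>t. canon I G P t i) \<subseteq> canon I G P n i" by (rule INT_lower) simp
  ultimately show "(\<Inter>t. canon I G P t i) = H i" using assms(2) i by auto
qed

lemma partb:
  assumes "maximal_red I G P M" "maximal_red I G P M'"
  shows "\<forall>i\<in>I. M' i = M i"
proof -
  have rM: "red_star I G P M" "red_star I G P M'" using assms unfolding maximal_red_def by auto
  show ?thesis
    using red_star_canon[OF rM(1)]
  proof
    assume "\<exists>n. \<forall>i\<in>I. M i = canon I G P n i"
    then obtain n where n: "\<forall>i\<in>I. M i = canon I G P n i" by blast
    show ?thesis using red_star_canon[OF rM(2)]
    proof
      assume "\<exists>m. \<forall>i\<in>I. M' i = canon I G P m i"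
      then obtain m where m: "\<forall>i\<in>I. M' i = canon I G P m i" by blast
      show ?thesis
      proof (cases "n \<le> m")
        case True
        then show ?thesis using maximal_canon_stable[OF assms(1) n, of "m - n"] m by simp
      next
        case False
        then show ?thesis using maximal_canon_stable[OF assms(2) m, of "n - m"] n by simp
      qed
    next
      assume "\<forall>i\<in>I. M' i = (\<Inter>t. canon I G P t i)"
      then show ?thesis using maximal_canon_Inter[OF assms(1) n] by simp
    qed
  next
    assume M: "\<forall>i\<in>I. M i = (\<Inter>t. canon I G P t i)"
    show ?thesis using red_star_canon[OF rM(2)]
    proof
      assume "\<exists>m. \<forall>i\<in>I. M' i = canon I G P m i"
      then obtain m where m: "\<forall>i\<in>I. M' i = canon I G P m i" by blast
      then show ?thesis using maximal_canon_Inter[OF assms(2) m] M by simp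
    next
      assume "\<forall>i\<in>I. M' i = (\<Inter>t. canon I G P t i)"
      then show ?thesis using M by simp
    qed
  qed
qed

lemma undominated_in:
  assumes rs: "red_star I G P H" and i: "i \<in> I" and xs: "xs \<in> G i"
    and ne: "PiE (I - {i}) H \<noteq> {}" and nd: "\<forall>z\<in>G i. \<not> succ_H I P H i z xs"
  shows "xs \<in> H i"
proof -
  have key: "(\<forall>j\<in>I. H j \<subseteq> canon I G P t j) \<longrightarrow> xs \<in> canon I G P t i" for t
  proof (induction t)
    case 0 then show ?case using xs by simp
  next
    case (Suc t)
    show ?case
    proof
      assume h: "\<forall>j\<in>I. H j \<subseteq> canon I G P (Suc t) j"
      have h': "\<forall>j\<in>I. H j \<subseteq> canon I G P t j"
        using h by auto
      then have xt: "xs \<in> canon I G P t i" using Suc.IH by blast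
      have "\<not> dominated I G P (canon I G P t) i xs"
      proof
        assume "dominated I G P (canon I G P t) i xs"
        then obtain w where w: "w \<in> G i" "\<forall>z\<in>PiE (I - {i}) (canon I G P t). w \<in> P i (z(i := xs))"
          unfolding dominated_def by blast
        have "PiE (I - {i}) H \<subseteq> PiE (I - {i}) (canon I G P t)"
        proof (rule PiE_mono)
          fix j assume "j \<in> I - {i}"
          then show "H j \<subseteq> canon I G P t j" using h' by blast
        qed
        then have "\<forall>z\<in>PiE (I - {i}) H. w \<in> P i (z(i := xs))" using w(2) by (auto simp del: PiE_iff)
        then have "succ_H I P H i w xs" using ne unfolding succ_H_def by simp
        then show False using nd w by blast
      qed
      then show "xs \<in> canon I G P (Suc t) i" using xt by simp
    qed
  qed
  show ?thesis using red_star_canon[OF rs]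
  proof
    assume "\<exists>n. \<forall>i\<in>I. H i = canon I G P n i"
    then obtain n where n: "\<forall>i\<in>I. H i = canon I G P n i" ..
    then have "\<forall>j\<in>I. H j \<subseteq> canon I G P n j" by simp
    then have "xs \<in> canon I G P n i" using key[of n] by (rule mp[rotated])
    then show ?thesis using n i by simp
  next
    assume H: "\<forall>i\<in>I. H i = (\<Inter>t. canon I G P t i)"
    have "\<forall>j\<in>I. H j \<subseteq> canon I G P t j" for t
    proof
      fix j assume "j \<in> I"
      moreover have "(\<Inter>t. canon I G P t j) \<subseteq> canon I G P t j" by (rule INT_lower) simp
      ultimately show "H j \<subseteq> canon I G P t j" using H by simp
    qed
    then have "xs \<in> canon I G P t i" for t using key[of t] by (rule mp[rotated])
    then have "xs \<in> (\<Inter>t. canon I G P t i)" by (rule INT_I)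
    then show ?thesis using H i by simp
  qed
qed

theorem corollary3:
  fixes I :: "'i set" and T :: "'i \<Rightarrow> 'v::real_vector topology"
    and G :: "'i \<Rightarrow> 'v set" and P Q :: "'i \<Rightarrow> ('i \<Rightarrow> 'v) \<Rightarrow> 'v set"
  assumes I_ne: "I \<noteq> {}"
    and tvs: "\<forall>i\<in>I. lc_tvs (T i)"
    and cpt: "\<forall>i\<in>I. compactin (T i) (G i) \<and> convex (G i)"
    and corr: "\<forall>i\<in>I. \<forall>x\<in>PiE I G. P i x \<subseteq> G i \<and> Q i x \<subseteq> G i"
    and propT: "property_T I G P Q"
    and c1: "\<forall>i\<in>I. \<forall>y\<in>G i. \<forall>x\<in>PiE I G. y \<in> Q i (x(i := y))"
    and c2: "\<forall>i\<in>I. \<forall>x\<in>PiE I G. convex (Q i x) \<and> closedin (T i) (Q i x)"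
    and c3: "\<forall>i\<in>I. \<forall>x\<in>PiE I G. convex (P i x)"
    and c4: "\<forall>i\<in>I. \<forall>x\<in>PiE I G. x i \<notin> P i x"
    and c5: "\<forall>i\<in>I. \<forall>y\<in>G i. openin (product_topology (\<lambda>j. subtopology (T j) (G j)) I)
                                  {x \<in> PiE I G. y \<in> P i x}"
  shows "(\<forall>H i x y. red_star I G P H \<and> i \<in> I \<and> x \<in> G i \<and> y \<in> G i \<and> succ_H I P H i y x
            \<longrightarrow> (\<exists>xs\<in>H i. succ_H I P H i xs x \<and> (\<forall>z\<in>G i. \<not> succ_H I P H i z xs)))
       \<and> (\<forall>M. maximal_red I G P M \<and> (\<forall>i\<in>I. M i \<noteq> {})
            \<longrightarrow> (\<forall>M'. maximal_red I G P M' \<longrightarrow> (\<forall>i\<in>I. M' i = M i)))"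
proof (intro conjI allI impI)
  fix M M' assume "maximal_red I G P M \<and> (\<forall>i\<in>I. M i \<noteq> {})" "maximal_red I G P M'"
  then show "\<forall>i\<in>I. M' i = M i" using partb by blast
next
  fix H i x y
  assume a: "red_star I G P H \<and> i \<in> I \<and> x \<in> G i \<and> y \<in> G i \<and> succ_H I P H i y x"
  then have rs: "red_star I G P H" and i: "i \<in> I" and x: "x \<in> G i" and sy: "succ_H I P H i y x" by auto
  define Hm where "Hm = PiE (I - {i}) H"
  have ne: "Hm \<noteq> {}" using sy unfolding succ_H_def Hm_def by auto
  have HG: "\<forall>j\<in>I. H j \<subseteq> G j" using red_star_sub[OF rs] by blast
  have ext: "z(i := a) \<in> PiE I G" if "z \<in> Hm" "a \<in> G i" for z a
    using that HG i unfolding Hm_def PiE_iff extensional_def by auto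
  let ?s = "\<lambda>a b. succ_H I P H i a b"
  have sD: "?s a b \<longleftrightarrow> Hm \<noteq> {} \<and> (\<forall>z\<in>Hm. a \<in> P i (z(i := b)))" for a b
    unfolding succ_H_def Hm_def by simp
  have pt: "P i w \<subseteq> Q i w \<and> (\<forall>b\<in>P i w. Q i (w(i := b)) \<subseteq> P i w)" if "w \<in> PiE I G" for w
    using propT that i unfolding property_T_def by blast
  have PQ: "P i (z(i:=a)) \<subseteq> Q i (z(i:=a))" "\<And>b. b \<in> P i (z(i:=a)) \<Longrightarrow> Q i (z(i:=b)) \<subseteq> P i (z(i:=a))"
    if "z \<in> Hm" "a \<in> G i" for z a
  proof -
    show "P i (z(i:=a)) \<subseteq> Q i (z(i:=a))" using pt[OF ext[OF that]] by blast
    fix b assume "b \<in> P i (z(i:=a))"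
    then have "Q i ((z(i:=a))(i := b)) \<subseteq> P i (z(i:=a))" using pt[OF ext[OF that]] by blast
    then show "Q i (z(i:=b)) \<subseteq> P i (z(i:=a))" by simp
  qed
  have PG: "P i (z(i:=a)) \<subseteq> G i" "Q i (z(i:=a)) \<subseteq> G i" if "z \<in> Hm" "a \<in> G i" for z a
    using corr ext[OF that] i by auto
  obtain z0 where z0: "z0 \<in> Hm" using ne by blast
  define C where "C = (\<lambda>b. \<Inter>z\<in>Hm. Q i (z(i := b)))"
  have irr: "\<not> ?s a a" if "a \<in> G i" for a
  proof
    assume "?s a a"
    then have "a \<in> P i (z0(i := a))" using sD z0 by blast
    moreover have "(z0(i := a)) i \<notin> P i (z0(i := a))" using c4 i ext[OF z0 that] by blast
    ultimately show False by simp
  qed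
  have cl: "b \<in> G i" if "a \<in> G i" "?s b a" for a b
    using that sD z0 PG by blast
  have trs: "?s c a" if "a \<in> G i" "?s b a" "?s c b" for a b c
  proof -
    have bG: "b \<in> G i" using cl that by blast
    have "c \<in> P i (z(i := a))" if "z \<in> Hm" for z
    proof -
      have "b \<in> P i (z(i:=a))" using \<open>?s b a\<close> sD that by blast
      moreover have "c \<in> P i (z(i:=b))" using \<open>?s c b\<close> sD that by blast
      ultimately show ?thesis using PQ[OF that \<open>a \<in> G i\<close>] PQ[OF that bG] by blast
    qed
    then show ?thesis using sD ne by blast
  qed
  have Ccl: "closedin (T i) (C b)" if "b \<in> G i" for b
    unfolding C_def using ne c2 i ext[OF _ that] by (intro closedin_Inter) auto
  have Cself: "b \<in> C b" if "b \<in> G i" for b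
  proof -
    have "b \<in> Q i (z(i := b))" if zz: "z \<in> Hm" for z
    proof -
      have "b \<in> Q i ((z(i := b))(i := b))" using c1 i \<open>b \<in> G i\<close> ext[OF zz \<open>b \<in> G i\<close>] by blast
      then show ?thesis by simp
    qed
    then show ?thesis unfolding C_def by blast
  qed
  have CG: "C b \<subseteq> G i" if "b \<in> G i" for b
    unfolding C_def using PG[OF z0 that] z0 by blast
  have Cup: "?s w a" if "a \<in> G i" "?s b a" "w \<in> C b" for a b w
  proof -
    have bG: "b \<in> G i" using cl that by blast
    have "w \<in> P i (z(i := a))" if zz: "z \<in> Hm" for z
    proof -
      have "b \<in> P i (z(i:=a))" using \<open>?s b a\<close> sD zz by blast
      moreover have "w \<in> Q i (z(i:=b))" using \<open>w \<in> C b\<close> zz unfolding C_def by blast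
      ultimately show ?thesis using PQ[OF zz \<open>a \<in> G i\<close>] by blast
    qed
    then show ?thesis using sD ne by blast
  qed
  have Cdn: "w \<in> C a" if "a \<in> G i" "?s w a" for a w
    unfolding C_def using that sD PQ by blast
  have cpti: "compactin (T i) (G i)" using cpt i by blast
  have "\<exists>m\<in>G i. ?s m x \<and> (\<forall>z. \<not> ?s z m)"
    apply (rule zorn_max[where T="T i" and G="G i" and s="\<lambda>a b. succ_H I P H i a b" and C=C and x=x and y=y])
    apply (rule cpti)
    apply (erule irr)
    apply (erule (2) trs)
    apply (erule (1) cl)
    apply (erule Ccl)
    apply (erule Cself)
    apply (erule CG)
    apply (erule (2) Cup)
    apply (erule (1) Cdn)
    apply (rule x)
    apply (rule sy)
    done
  then obtain m where m: "m \<in> G i" "?s m x" "\<forall>z. \<not> ?s z m" by blast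
  have "m \<in> H i"
    using undominated_in[OF rs i m(1)] ne m(3) unfolding Hm_def by blast
  then show "\<exists>xs\<in>H i. succ_H I P H i xs x \<and> (\<forall>z\<in>G i. \<not> succ_H I P H i z xs)"
    using m by blast
qed

end
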